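(* Let $n,k$ be positive integers such that $s^{n,k}=\frac{n(n+1)}{2k}$ is an integer, and let $\mathcal P=[p_1,\dots,p_k]$ be an ascending partition of $n$ of size $k$ of the form $\mathcal P=[2^e,p^f,\ldots]$ with $e,f>0$ and $p\ge 3$; that is, $p_1=\cdots=p_e=2$, $p_{e+1}=\cdots=p_{e+f}=p$, and $p_i>p$ for all $i>e+f$. Let $c=s^{n,k}-n$, $C=\{x\in[n]: x\ge c\}$ and $h=|C|-2e=2n-s^{n,k}+1-2e$. Suppose that $f>h$ and \[ \sum_{i=c-p(f-h)}^{c-1} i < (f-h)\,s^{n,k}. \] Then $\mathcal P$ is non-equitable.
   Context: $[n]=\{1,2,\ldots,n\}$. An ascending partition of $n$ of size $k$ is a sequence of positive integers $[p_1,\ldots,p_k]$ with $p_1\le\cdots\le p_k$ and $\sum_i p_i=n$. Such a partition is equitable if $[n]$ can be partitioned into sets $A_1,\dots,A_k$ with $|A_i|=p_i$ such that all the sums $\sum_{x\in A_i}x$ are equal (necessarily to $s^{n,k}$). The notation $[q_1^{e_1},q_2^{e_2},\ldots]$ with $q_1<q_2<\cdots$ means the ascending partition having exactly $e_i$ parts equal to $q_i$. *)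

theory Defs
  imports Main
begin

text \<open>An ascending partition of n of size k, as a list [p_1,...,p_k] (0-indexed in Isabelle).\<close>
definition ascending_partition :: "nat \<Rightarrow> nat \<Rightarrow> nat list \<Rightarrow> bool" where
  "ascending_partition n k P \<longleftrightarrow>
     length P = k \<and> sorted P \<and> (\<forall>x\<in>set P. 0 < x) \<and> sum_list P = n"

definition equitable :: "nat \<Rightarrow> nat list \<Rightarrow> bool" where
  "equitable n P \<longleftrightarrow>
     (\<exists>A :: nat \<Rightarrow> nat set.
        (\<Union>i<length P. A i) = {1..n} \<and>
        (\<forall>i<length P. \<forall>j<length P. i \<noteq> j \<longrightarrow> A i \<inter> A j = {}) \<and>
        (\<forall>i<length P. card (A i) = P ! i) \<and>
        (\<forall>i<length P. \<forall>j<length P. \<Sum>(A i) = \<Sum>(A j)))"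

end

theory Submission
  imports Defs
begin

lemma top_sum:
  fixes S :: "int set"
  shows "finite S \<Longrightarrow> \<forall>x\<in>S. x \<le> b \<Longrightarrow> \<Sum>S \<le> \<Sum>{b - int (card S) + 1 .. b}"
proof (induction "card S" arbitrary: S b)
  case 0
  then show ?case by simp
next
  case (Suc m)
  then have ne: "S \<noteq> {}" by auto
  define M where "M = Max S"
  have MS: "M \<in> S" using Suc ne M_def by simp
  have Mb: "M \<le> b" using MS Suc by auto
  define S' where "S' = S - {M}"
  have cS': "m = card S'" using Suc MS S'_def by simp
  have fS': "finite S'" using Suc S'_def by simp
  have bS': "\<forall>x\<in>S'. x \<le> b - 1"
  proof
    fix x assume "x \<in> S'"
    then have "x \<in> S" "x \<noteq> M" using S'_def by auto
    then have "x \<le> M" using M_def Suc by simp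
    with \<open>x \<noteq> M\<close> Mb show "x \<le> b - 1" by simp
  qed
  have IH: "\<Sum>S' \<le> \<Sum>{b - 1 - int m + 1 .. b - 1}"
    using Suc.hyps(1)[OF cS' fS' bS'] cS' by simp
  have e1: "\<Sum>S = M + \<Sum>S'" using Suc MS S'_def by (simp add: sum.remove)
  have "{b - int (card S) + 1 .. b} = insert b {b - 1 - int m + 1 .. b - 1}"
    using Suc.hyps(2) by auto
  then have e2: "\<Sum>{b - int (card S) + 1 .. b} = b + \<Sum>{b - 1 - int m + 1 .. b - 1}"
    by simp
  show ?case using IH e1 e2 Mb by linarith
qed

theorem mainTheorem1:
  fixes n k e f p :: nat and P :: "nat list" and s c h :: int and C :: "nat set"
  assumes "0 < n" and "0 < k"
    and "(2 * k) dvd (n * (n + 1))"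
    and "s = int (n * (n + 1) div (2 * k))"
    and "ascending_partition n k P"
    and "0 < e" and "0 < f" and "3 \<le> p" and "e + f \<le> k"
    and "\<forall>i<e. P ! i = 2"
    and "\<forall>i. e \<le> i \<and> i < e + f \<longrightarrow> P ! i = p"
    and "\<forall>i. e + f \<le> i \<and> i < k \<longrightarrow> P ! i > p"
    and "c = s - int n"
    and "C = {x \<in> {1..n}. int x \<ge> c}"
    and "h = int (card C) - 2 * int e"
    and "int f > h"
    and "(\<Sum>i\<in>{c - int p * (int f - h) .. c - 1}. i) < (int f - h) * s"
  shows "\<not> equitable n P"
proof
  assume "equitable n P"
  then obtain A :: "nat \<Rightarrow> nat set" where
    Aun: "(\<Union>i<length P. A i) = {1..n}" and
    Adisj: "\<forall>i<length P. \<forall>j<length P. i \<noteq> j \<longrightarrow> A i \<inter> A j = {}" and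
    Acard: "\<forall>i<length P. card (A i) = P ! i" and
    Asum: "\<forall>i<length P. \<forall>j<length P. \<Sum>(A i) = \<Sum>(A j)"
    unfolding equitable_def by blast
  have lenP: "length P = k" using assms(5) unfolding ascending_partition_def by simp
  have Asub: "A i \<subseteq> {1..n}" if "i < k" for i using Aun that lenP by blast
  have Afin: "finite (A i)" if "i < k" for i using Asub[OF that] finite_subset by blast
  define T where "T = \<Sum>(A 0)"
  have AT: "\<Sum>(A i) = T" if "i < k" for i using Asum[rule_format, of i 0] that lenP assms(2) T_def by simp
  have "\<Sum>{1..n} = (\<Sum>i<k. \<Sum>(A i))"
    unfolding Aun[unfolded lenP, symmetric]
    by (rule sum.UNION_disjoint) (use Adisj[unfolded lenP] Afin in auto)
  also have "\<dots> = k * T" using AT by simp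
  finally have kT: "\<Sum>{1..n} = k * T" .
  have "2 * \<Sum>{1..n} = n * (n + 1)"
    using double_gauss_sum_from_Suc_0[where n = n, where 'a = nat] by simp
  then have "n * (n + 1) = (2 * k) * T" using kT by simp
  then have sT: "s = int T" using assms(4) assms(2) by simp
  have pairC: "A i \<subseteq> C" if "i < e" for i
  proof -
    have ik: "i < k" using that assms(9) by simp
    have "card (A i) = 2" using Acard assms(10) that ik lenP by simp
    then obtain a b where ab: "a \<noteq> b" "A i = {a, b}" by (auto simp: card_2_iff)
    have "a + b = T" using AT[OF ik] ab by simp
    moreover have "a \<in> {1..n}" "b \<in> {1..n}" using Asub[OF ik] ab by auto
    ultimately show ?thesis using assms(14) assms(13) sT ab by auto
  qed
  define D where "D = (\<Union>i<e. A i)"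
  have DC: "D \<subseteq> C" using pairC D_def by auto
  have cardD: "card D = 2 * e"
  proof -
    have "card D = (\<Sum>i<e. card (A i))" unfolding D_def
      using Afin Adisj lenP assms(9) by (intro card_UN_disjoint) auto
    also have "\<dots> = (\<Sum>i<e. 2)" using Acard assms(10) lenP assms(9) by simp
    finally show ?thesis by simp
  qed
  have finC: "finite C" using assms(14) by simp
  have cardCD: "int (card (C - D)) = h"
    using card_Diff_subset[OF finite_subset[OF DC finC] DC] card_mono[OF finC DC] cardD assms(15)
    by simp
  define J where "J = {e..<e+f}"
  define J1 where "J1 = {i\<in>J. A i \<inter> C \<noteq> {}}"
  define J2 where "J2 = J - J1"
  define g where "g i = (SOME x. x \<in> A i \<inter> C)" for i
  have gA: "g i \<in> A i \<inter> C" if "i \<in> J1" for i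
  proof -
    have "\<exists>x. x \<in> A i \<inter> C" using that J1_def by auto
    then show ?thesis unfolding g_def by (rule someI_ex)
  qed
  have Jk: "i < k" if "i \<in> J" for i using that J_def assms(9) by auto
  have inj: "inj_on g J1"
  proof
    fix i j assume ij: "i \<in> J1" "j \<in> J1" "g i = g j"
    show "i = j"
    proof (rule ccontr)
      assume "i \<noteq> j"
      then have "A i \<inter> A j = {}" using Adisj ij Jk J1_def lenP by auto
      then show False using gA ij by (metis IntD1 disjoint_iff)
    qed
  qed
  have gimg: "g ` J1 \<subseteq> C - D"
  proof
    fix y assume "y \<in> g ` J1"
    then obtain i where i: "i \<in> J1" "y = g i" by auto
    have yA: "y \<in> A i" "y \<in> C" using gA[OF i(1)] i by auto
    have "y \<notin> A j" if "j < e" for j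
    proof -
      have "i \<noteq> j" "i < k" "j < k" using i J1_def J_def that Jk assms(9) by auto
      then have "A i \<inter> A j = {}" using Adisj lenP by auto
      then show ?thesis using yA by auto
    qed
    then show "y \<in> C - D" using yA D_def by auto
  qed
  have cJ1: "int (card J1) \<le> h"
    using card_inj_on_le[OF inj gimg] cardCD finC by simp
  have finJ: "finite J" using J_def by simp
  have cJ: "card J = f" using J_def by simp
  have J1J: "J1 \<subseteq> J" using J1_def by auto
  have cJ2: "card J2 = f - card J1" using card_Diff_subset[OF finite_subset[OF J1J finJ] J1J] cJ J2_def by simp
  have "card J1 \<le> f" using card_mono[OF finJ J1J] cJ by simp
  then have cJ2': "nat (int f - h) \<le> card J2" using cJ2 cJ1 by linarith
  obtain J3 where J3: "J3 \<subseteq> J2" "card J3 = nat (int f - h)"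
    using obtain_subset_with_card_n[OF cJ2'] by blast
  have J3J: "J3 \<subseteq> J" using J3 J2_def by auto
  have finJ3: "finite J3" using finite_subset[OF J3J finJ] .
  have J3C: "A i \<inter> C = {}" if "i \<in> J3" for i using that J3 J2_def J1_def J3J by auto
  define U where "U = (\<Union>i\<in>J3. A i)"
  have disj3: "\<forall>i\<in>J3. \<forall>j\<in>J3. i \<noteq> j \<longrightarrow> A i \<inter> A j = {}"
    using Adisj lenP J3J Jk by blast
  have fin3: "\<forall>i\<in>J3. finite (A i)" using Afin J3J Jk by blast
  have cardU: "card U = p * nat (int f - h)"
  proof -
    have "card U = (\<Sum>i\<in>J3. card (A i))" unfolding U_def
      using card_UN_disjoint[OF finJ3] disj3 fin3 by blast
    also have "\<dots> = (\<Sum>i\<in>J3. p)"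
      using Acard assms(11) lenP J3J Jk J_def by (intro sum.cong) auto
    finally show ?thesis using J3 by simp
  qed
  have sumU: "\<Sum>U = nat (int f - h) * T"
  proof -
    have "\<Sum>U = (\<Sum>i\<in>J3. \<Sum>(A i))" unfolding U_def
      using sum.UNION_disjoint[OF finJ3] disj3 fin3 by blast
    also have "\<dots> = (\<Sum>i\<in>J3. T)"
      using AT J3J Jk by (intro sum.cong) auto
    finally show ?thesis using J3 by simp
  qed
  have Un: "U \<subseteq> {1..n}" using U_def Asub J3J Jk by blast
  have finU: "finite U" using finite_subset[OF Un] by simp
  have Ulow: "\<forall>x\<in>int ` U. x \<le> c - 1"
  proof
    fix y assume "y \<in> int ` U"
    then obtain x where x: "x \<in> U" "y = int x" by auto
    then obtain i where "i \<in> J3" "x \<in> A i" using U_def by auto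
    then have "x \<notin> C" using J3C by auto
    then show "y \<le> c - 1" using x Un assms(14) by auto
  qed
  have injint: "inj_on int U" by (simp add: inj_on_def)
  have "\<Sum>(int ` U) \<le> \<Sum>{c - 1 - int (card (int ` U)) + 1 .. c - 1}"
    using top_sum[OF _ Ulow] finU by simp
  moreover have "card (int ` U) = card U" using card_image[OF injint] .
  moreover have "\<Sum>(int ` U) = int (\<Sum>U)" using sum.reindex[OF injint, of id] by simp
  ultimately have "int (nat (int f - h) * T) \<le> \<Sum>{c - int (p * nat (int f - h)) .. c - 1}"
    using cardU sumU by simp
  moreover have "int (nat (int f - h) * T) = (int f - h) * s" using sT assms(16) by simp
  moreover have "int (p * nat (int f - h)) = int p * (int f - h)" using assms(16) by simp
  moreover have "int (nat (int f - h)) = int f - h" using assms(16) by simp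
  ultimately show False using assms(17) by (simp del: of_nat_mult)
qed

end
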